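(* Let $p\in(0,1]$ and write points of $(0,p)^3$ as $(p_{11},p_{10},p_{01})$. Define $$\mathcal{F}_a(p)=\{(p_{11},p_{10},p_{01})\in(0,p)^3:\ \max(p_{10}+p_{01}-p,0)\le p_{11}\le p_{10}+p_{01}\},$$ $$\mathcal{F}_m(p)=\{(p_{11},p_{10},p_{01})\in(0,p)^3:\ p_{01}\le p_{11}p/p_{10}\},$$ $$\mathcal{F}_o(p)=\Big\{(p_{11},p_{10},p_{01})\in(0,p)^3:\ \frac{(1-p)p_{10}p_{01}}{(1-p)p_{10}p_{01}+p(1-p_{10})(1-p_{01})}<p_{11}\Big\},$$ and let $F_a(p),F_m(p),F_o(p)$ denote their three-dimensional Lebesgue volumes. Then $F_a(p)=\tfrac23 p^3$ and $F_m(p)=\tfrac34 p^3$, and the values of $F_o(p)/p^3$, rounded to two decimal places, are $$\begin{array}{c|cccccccccc} p&0.1&0.2&0.3&0.4&0.5&0.6&0.7&0.8&0.9&1\\\hline F_o(p)/p^3&0.75&0.76&0.76&0.77&0.77&0.78&0.79&0.81&0.85&1.00\end{array}$$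
   Context: Here $p_{ge}=P(Y=1\mid G=g,E=e)$ for binary $G,E,Y$; the sets $\mathcal{F}_a(p),\mathcal{F}_m(p),\mathcal{F}_o(p)$ are the sets of $(p_{11},p_{10},p_{01})$ for which the fourth probability $p_{00}$ determined by no interaction on the risk difference scale ($p_{00}=p_{10}+p_{01}-p_{11}$), risk ratio scale ($p_{00}=p_{10}p_{01}/p_{11}$), or odds ratio scale ($\frac{p_{00}}{1-p_{00}}=\frac{p_{10}}{1-p_{10}}\frac{p_{01}}{1-p_{01}}\big/\frac{p_{11}}{1-p_{11}}$), respectively, lies in the allowed range. For $p=1$, $\mathcal{F}_o(1)=(0,1)^3$. *)

theory Defs
  imports "HOL-Analysis.Analysis"
begin

definition cube :: "real \<Rightarrow> (real \<times> real \<times> real) set" where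
  "cube p = {0<..<p} \<times> {0<..<p} \<times> {0<..<p}"

definition Fa_set :: "real \<Rightarrow> (real \<times> real \<times> real) set" where
  "Fa_set p = {(p11, p10, p01). (p11, p10, p01) \<in> cube p \<and>
      max (p10 + p01 - p) 0 \<le> p11 \<and> p11 \<le> p10 + p01}"

definition Fm_set :: "real \<Rightarrow> (real \<times> real \<times> real) set" where
  "Fm_set p = {(p11, p10, p01). (p11, p10, p01) \<in> cube p \<and>
      p01 \<le> p11 * p / p10}"

definition Fo_set :: "real \<Rightarrow> (real \<times> real \<times> real) set" where
  "Fo_set p = {(p11, p10, p01). (p11, p10, p01) \<in> cube p \<and>
      (1 - p) * p10 * p01 / ((1 - p) * p10 * p01 + p * (1 - p10) * (1 - p01)) < p11}"

definition Fa :: "real \<Rightarrow> real" where "Fa p = measure lebesgue (Fa_set p)"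
definition Fm :: "real \<Rightarrow> real" where "Fm p = measure lebesgue (Fm_set p)"
definition Fo :: "real \<Rightarrow> real" where "Fo p = measure lebesgue (Fo_set p)"

definition rounds_to :: "real \<Rightarrow> int \<Rightarrow> bool" where
  "rounds_to x k \<longleftrightarrow> round (100 * x) = k"

end

theory Submission
  imports Defs
begin



definition Q :: "real \<Rightarrow> real" where "Q x = (\<Sum>n. x^n / real (Suc n))"
definition Li :: "real \<Rightarrow> real" where "Li x = (\<Sum>n. (1 / (real (Suc n))^2) * x^(Suc n))"

lemma summable_Q: assumes "\<bar>x\<bar> < 1" shows "summable (\<lambda>n. x^n / real (Suc n))"
proof (rule summable_comparison_test[OF _ summable_geometric[of "\<bar>x\<bar>"]])
  show "\<exists>N. \<forall>n\<ge>N. norm (x ^ n / real (Suc n)) \<le> \<bar>x\<bar> ^ n"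
  proof (intro exI allI impI)
    fix n :: nat
    have "\<bar>x\<bar>^n * 1 \<le> \<bar>x\<bar>^n * real (Suc n)" by (intro mult_left_mono) auto
    then show "norm (x ^ n / real (Suc n)) \<le> \<bar>x\<bar> ^ n"
      by (simp add: power_abs abs_divide divide_le_eq del: of_nat_Suc)
  qed
qed (use assms in auto)

lemma summable_Li: assumes "\<bar>x\<bar> < 1" shows "summable (\<lambda>n. (1 / (real (Suc n))^2) * x^(Suc n))"
proof (rule summable_comparison_test[OF _ summable_geometric[of "\<bar>x\<bar>"]])
  show "\<exists>N. \<forall>n\<ge>N. norm ((1 / (real (Suc n))^2) * x^(Suc n)) \<le> \<bar>x\<bar> ^ n"
  proof (intro exI allI impI)
    fix n :: nat
    have "norm ((1 / (real (Suc n))^2) * x^(Suc n)) = \<bar>x\<bar>^n * (\<bar>x\<bar> / (real (Suc n))^2)"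
      by (simp add: abs_mult power_abs)
    also have "\<dots> \<le> \<bar>x\<bar>^n * 1"
      using assms mult_mono[of 1 "real (Suc n)" 1 "real (Suc n)"]
      by (intro mult_left_mono) (auto simp: divide_le_eq power2_eq_square simp del: of_nat_Suc)
    finally show "norm ((1 / (real (Suc n))^2) * x^(Suc n)) \<le> \<bar>x\<bar> ^ n" by simp
  qed
qed (use assms in auto)

lemma Li_deriv: assumes "\<bar>x\<bar> < 1" shows "(Li has_real_derivative Q x) (at x)"
proof -
  have eq: "(\<lambda>n. (1 / (real (Suc n))^2) * real (Suc n) * y^n) = (\<lambda>n. y^n / real (Suc n))" for y
  proof
    fix n
    have "real (Suc n) > 0" by simp
    then show "(1 / (real (Suc n))^2) * real (Suc n) * y^n = y^n / real (Suc n)"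
      by (simp add: power2_eq_square field_simps del: of_nat_Suc)
  qed
  have "DERIV (\<lambda>x. (\<Sum>n. (1 / (real (Suc n))^2) * x^(Suc n))) x :> (\<Sum>n. (1 / (real (Suc n))^2) * real (Suc n) * x^n)"
    apply (rule DERIV_power_series'[where R=1])
    subgoal for y unfolding eq by (rule summable_Q) auto
    using assms by auto
  then show ?thesis unfolding Li_def[abs_def] Q_def eq .
qed

lemma Q_cont: assumes "\<bar>x\<bar> < 1" shows "isCont Q x"
proof -
  let ?K = "(1 + \<bar>x\<bar>)/2"
  have "isCont (\<lambda>x. \<Sum>n. (1 / real (Suc n)) * x^n) x"
    by (rule isCont_powser[where K = ?K]) (use assms summable_Q[of ?K] in auto)
  then show ?thesis unfolding Q_def[abs_def] by simp
qed

lemma Li_cont: assumes "\<bar>x\<bar> < 1" shows "isCont Li x"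
  using Li_deriv[OF assms] by (rule DERIV_isCont)

lemma Li_0: "Li 0 = 0" by (simp add: Li_def)
lemma Q_0: "Q 0 = 1"
proof -
  have "Q 0 = (\<Sum>n. (1 / real (Suc n)) * 0^n)" by (simp add: Q_def)
  also have "\<dots> = 1" by (subst powser_zero) simp
  finally show ?thesis .
qed

lemma Q_ln: assumes "0 \<le> x" "x < 1" shows "x * Q x = - ln (1 - x)"
proof -
  have "ln (1 - x) = (\<Sum>n. (-1)^n * (1 / real (n + 1)) * ((1 - x) - 1)^(Suc n))"
    using assms by (intro ln_series) auto
  also have "\<dots> = (\<Sum>n. - (x * (x^n / real (Suc n))))"
    by (rule suminf_cong) (simp add: power_minus' field_simps)
  also have "\<dots> = - (\<Sum>n. x * (x^n / real (Suc n)))"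
    by (rule suminf_minus) (use summable_mult[OF summable_Q[of x]] assms in auto)
  also have "(\<Sum>n. x * (x^n / real (Suc n))) = x * Q x"
    unfolding Q_def by (rule suminf_mult) (use summable_Q[of x] assms in auto)
  finally show ?thesis by simp
qed

lemma tail_bound:
  fixes f :: "nat \<Rightarrow> real"
  assumes "summable f" "\<And>n. 0 \<le> f n" "\<And>n. f (n + N) \<le> C * x^n" "0 \<le> x" "x < 1"
  shows "sum f {..<N} \<le> suminf f" "suminf f \<le> sum f {..<N} + C / (1 - x)"
proof -
  show "sum f {..<N} \<le> suminf f" using assms by (intro sum_le_suminf) auto
  have s2: "summable (\<lambda>n. f (n + N))" using assms(1) by (simp add: summable_iff_shift)
  have "suminf f = (\<Sum>n. f (n + N)) + sum f {..<N}"
    using suminf_split_initial_segment[OF assms(1), of N] by simp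
  also have "(\<Sum>n. f (n + N)) \<le> (\<Sum>n. C * x^n)"
    using assms s2 by (intro suminf_le) (auto intro!: summable_mult)
  also have "(\<Sum>n. C * x^n) = C / (1 - x)"
    using assms by (simp add: suminf_mult suminf_geometric)
  finally show "suminf f \<le> sum f {..<N} + C / (1 - x)" by simp
qed

lemma Q_bounds:
  assumes "0 \<le> x" "x < 1"
  shows "(\<Sum>n<N. x^n / real (Suc n)) \<le> Q x"
        "Q x \<le> (\<Sum>n<N. x^n / real (Suc n)) + (x^N / real (Suc N)) / (1 - x)"
proof -
  have "f (n + N) \<le> (x^N / real (Suc N)) * x^n" if "f = (\<lambda>n. x^n / real (Suc n))" for f n
    using assms that by (auto simp: power_add field_simps mult_left_mono)
  note tb = tail_bound[OF summable_Q[of x] _ this[OF refl]]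
  show "(\<Sum>n<N. x^n / real (Suc n)) \<le> Q x" "Q x \<le> (\<Sum>n<N. x^n / real (Suc n)) + (x^N / real (Suc N)) / (1 - x)"
    using tb assms unfolding Q_def by auto
qed

lemma Li_bounds:
  assumes "0 \<le> x" "x < 1"
  shows "(\<Sum>n<N. (1 / (real (Suc n))^2) * x^(Suc n)) \<le> Li x"
        "Li x \<le> (\<Sum>n<N. (1 / (real (Suc n))^2) * x^(Suc n)) + (x^(Suc N) / (real (Suc N))^2) / (1 - x)"
proof -
  have "f (n + N) \<le> (x^(Suc N) / (real (Suc N))^2) * x^n" if "f = (\<lambda>n. (1 / (real (Suc n))^2) * x^(Suc n))" for f n
  proof -
    have "(real (Suc N))^2 \<le> (real (Suc (n+N)))^2" by (intro power_mono) auto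
    then have "1 / (real (Suc (n+N)))^2 \<le> 1 / (real (Suc N))^2"
      by (intro divide_left_mono) auto
    then have "(1 / (real (Suc (n+N)))^2) * (x^(Suc N) * x^n) \<le> (1 / (real (Suc N))^2) * (x^(Suc N) * x^n)"
      using assms by (intro mult_right_mono) auto
    then show ?thesis using that by (simp add: power_add mult_ac)
  qed
  note tb = tail_bound[OF summable_Li[of x] _ this[OF refl]]
  show "(\<Sum>n<N. (1 / (real (Suc n))^2) * x^(Suc n)) \<le> Li x"
       "Li x \<le> (\<Sum>n<N. (1 / (real (Suc n))^2) * x^(Suc n)) + (x^(Suc N) / (real (Suc N))^2) / (1 - x)"
    using tb assms unfolding Li_def by auto
qed



lemma vol3:
  fixes S :: "(real \<times> real \<times> real) set"
  assumes S: "S \<in> sets borel"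
  shows "emeasure lborel S = (\<integral>\<^sup>+y. \<integral>\<^sup>+z. emeasure lborel {x. (x,y,z) \<in> S} \<partial>lborel \<partial>lborel)"
proof -
  have S': "S \<in> sets (lborel \<Otimes>\<^sub>M (lborel :: (real\<times>real) measure))"
    using S by (subst lborel_prod) simp
  have "emeasure lborel S = emeasure (lborel \<Otimes>\<^sub>M (lborel :: (real\<times>real) measure)) S"
    by (simp add: lborel_prod)
  also have "\<dots> = (\<integral>\<^sup>+yz. emeasure lborel ((\<lambda>x. (x, yz)) -` S) \<partial>(lborel :: (real\<times>real) measure))"
    by (rule lborel_pair.emeasure_pair_measure_alt2[OF S'])
  also have "\<dots> = (\<integral>\<^sup>+yz. emeasure lborel ((\<lambda>x. (x, yz)) -` S) \<partial>(lborel \<Otimes>\<^sub>M lborel :: (real\<times>real) measure))"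
    by (simp add: lborel_prod)
  also have "\<dots> = (\<integral>\<^sup>+y. \<integral>\<^sup>+z. emeasure lborel ((\<lambda>x. (x, (y,z))) -` S) \<partial>lborel \<partial>lborel)"
  proof (rule lborel.nn_integral_fst[symmetric])
    have "(\<lambda>yz. emeasure lborel ((\<lambda>x. (x, yz)) -` S)) \<in> borel_measurable (lborel :: (real\<times>real) measure)"
      using lborel_pair.measurable_emeasure_Pair2[OF S'] by simp
    then show "(\<lambda>yz. emeasure lborel ((\<lambda>x. (x, yz)) -` S)) \<in> borel_measurable (lborel \<Otimes>\<^sub>M lborel :: (real\<times>real) measure)"
      by (simp add: lborel_prod)
  qed
  finally show ?thesis by (simp add: vimage_def)
qed

lemma Fo_borel: "Fo_set p \<in> sets borel"
proof -
  have "Fo_set p = {w \<in> space (borel \<Otimes>\<^sub>M (borel \<Otimes>\<^sub>M borel)). 0 < fst w \<and> fst w < p \<and> 0 < fst (snd w) \<and> fst (snd w) < p \<and> 0 < snd (snd w) \<and> snd (snd w) < p \<and>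
     (1 - p) * fst (snd w) * snd (snd w) / ((1 - p) * fst (snd w) * snd (snd w) + p * (1 - fst (snd w)) * (1 - snd (snd w))) < fst w}"
    by (auto simp: Fo_set_def cube_def space_pair_measure)
  also have "\<dots> \<in> sets (borel \<Otimes>\<^sub>M (borel \<Otimes>\<^sub>M borel))" by measurable
  finally show ?thesis unfolding borel_prod .
qed

lemma iter2:
  fixes S :: "(real \<times> real \<times> real) set" and g :: "real \<Rightarrow> real \<Rightarrow> real"
  assumes S: "S \<in> sets borel"
  and sec_in: "\<And>y z. 0<y \<Longrightarrow> y<p \<Longrightarrow> 0<z \<Longrightarrow> z<p \<Longrightarrow> emeasure lborel {x. (x,y,z) \<in> S} = ennreal (g y z)"
  and sec_out: "\<And>x y z. (x,y,z) \<in> S \<Longrightarrow> 0<y \<and> y<p \<and> 0<z \<and> z<p"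
  and g_nn: "\<And>y z. 0<y \<Longrightarrow> y<p \<Longrightarrow> 0<z \<Longrightarrow> z<p \<Longrightarrow> 0 \<le> g y z"
  and g_int: "\<And>y. 0<y \<Longrightarrow> y<p \<Longrightarrow> (g y has_integral G y) {0<..<p}"
  and G_int: "(G has_integral V) {0<..<p}"
  shows "measure lebesgue S = V"
proof -
  have G_nn: "0 \<le> G y" if "0<y" "y<p" for y
    by (rule has_integral_nonneg[OF g_int[OF that]]) (use g_nn that in force)
  have V_nn: "0 \<le> V"
    by (rule has_integral_nonneg[OF G_int]) (use G_nn in force)
  have inner: "(\<integral>\<^sup>+z. emeasure lborel {x. (x,y,z) \<in> S} \<partial>lborel) = ennreal (G y) * indicator {0<..<p} y" for y
  proof (cases "0<y \<and> y<p")
    case True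
    have "(\<integral>\<^sup>+z. emeasure lborel {x. (x,y,z) \<in> S} \<partial>lborel) = (\<integral>\<^sup>+z. ennreal (g y z) * indicator {0<..<p} z \<partial>lborel)"
    proof (rule nn_integral_cong)
      fix z
      show "emeasure lborel {x. (x,y,z) \<in> S} = ennreal (g y z) * indicator {0<..<p} z"
      proof (cases "0<z \<and> z<p")
        case True2: True
        then show ?thesis using sec_in[of y z] True by (simp add: indicator_def)
      next
        case False
        then have "{x. (x,y,z) \<in> S} = {}" using sec_out[of _ y z] by auto
        then show ?thesis using False by (simp add: indicator_def)
      qed
    qed
    also have "\<dots> = ennreal (G y)"
      by (rule nn_integral_has_integral_lebesgue') (use True g_nn[of y] g_int[of y] in auto)
    finally show ?thesis using True by (simp add: indicator_def)
  next
    case False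
    then have "\<And>z. {x. (x,y,z) \<in> S} = {}" using sec_out[of _ y] by auto
    then show ?thesis using False by (simp add: indicator_def)
  qed
  have "emeasure lborel S = (\<integral>\<^sup>+y. ennreal (G y) * indicator {0<..<p} y \<partial>lborel)"
    unfolding vol3[OF S] inner ..
  also have "\<dots> = ennreal V"
    by (rule nn_integral_has_integral_lebesgue') (use G_nn G_int in auto)
  finally have "emeasure lborel S = ennreal V" .
  then have "measure lborel S = V" using V_nn by (simp add: measure_def)
  then show ?thesis using S by simp
qed


lemma Li_chain: "(f has_real_derivative f') (at x) \<Longrightarrow> \<bar>f x\<bar> < 1 \<Longrightarrow> ((\<lambda>x. Li (f x)) has_real_derivative Q (f x) * f') (at x)"
  using DERIV_chain2[OF Li_deriv] by blast

lemma K1_deriv: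
  fixes p y :: real
  assumes p: "0 < p" "p < 1" and y: "0 < y" "y < p"
  defines "r \<equiv> 1 - p"
  shows "((\<lambda>y. -r*p*( 2*(p-y) - p*r*(ln(1-y) - ln r)/(p-y) - p*ln(1-y) - (1-y)*(ln(1-y) - ln r)
          + (p - r)*(Li ((p-y)/(1-y)) + (ln(1-y) - ln r)^2/2))) has_real_derivative
     (r*y/(p-y)) * (-p + (p*(1-y)/(p-y)) * (ln(1-y) - ln r))) (at y)"
proof -
  have wlt: "\<bar>(p-y)/(1-y)\<bar> < 1" using p y by (auto simp: abs_if divide_less_eq)
  have Qw: "Q ((p-y)/(1-y)) = (ln(1-y) - ln r) * (1-y)/(p-y)"
  proof -
    have w0: "0 \<le> (p-y)/(1-y)" "(p-y)/(1-y) < 1" using p y by (auto simp: divide_less_eq)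
    have "1 - (p-y)/(1-y) = r/(1-y)" using p y by (simp add: r_def field_simps)
    then have "ln (1 - (p-y)/(1-y)) = ln r - ln (1-y)" using p y by (simp add: r_def ln_div)
    then have "(p-y)/(1-y) * Q ((p-y)/(1-y)) = ln(1-y) - ln r" using Q_ln[OF w0] by simp
    then show ?thesis using p y by (simp add: field_simps)
  qed
  have d1: "((\<lambda>y. 1 - y) has_real_derivative -1) (at x)" for x
    by (rule derivative_eq_intros refl)+ simp
  have dp: "((\<lambda>y. p - y) has_real_derivative -1) (at x)" for x
    by (rule derivative_eq_intros refl)+ simp
  obtain m u where mu: "p - y = m" "1 - y = u" by auto
  have m0: "m \<noteq> 0" "u \<noteq> 0" using mu p y by auto
  have ys: "y = 1 - u" "p = 1 - u + m" "r = u - m" using mu r_def by auto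
  show ?thesis
    apply (rule derivative_eq_intros refl Li_chain d1 dp | use p y in linarith | rule wlt)+
    apply (subst Qw)
    apply (unfold mu)
    apply (simp add: field_simps power2_eq_square m0)
    apply (simp add: ys)
    apply (simp add: algebra_simps)
    done
qed


lemma Qw_lemma:
  fixes p y :: real
  assumes p: "0 < p" "p < 1" and y: "0 \<le> y" "y < p"
  shows "Q ((p-y)/(1-y)) * (p-y) = (ln(1-y) - ln (1-p)) * (1-y)"
proof -
  have w0: "0 \<le> (p-y)/(1-y)" "(p-y)/(1-y) < 1" using p y by (auto simp: divide_less_eq)
  have "1 - (p-y)/(1-y) = (1-p)/(1-y)" using p y by (simp add: field_simps)
  then have "ln (1 - (p-y)/(1-y)) = ln (1-p) - ln (1-y)" using p y by (simp add: ln_div)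
  then have "(p-y)/(1-y) * Q ((p-y)/(1-y)) = ln(1-y) - ln (1-p)" using Q_ln[OF w0] by simp
  then show ?thesis using p y by (simp add: field_simps)
qed

lemma t_bounds:
  fixes p y z :: real
  assumes p: "0 < p" "p < 1" and y: "0 < y" "y < p" and z: "0 < z" "z < p"
  shows "0 < (1-p)*y*z/((1-p)*y*z + p*(1-y)*(1-z))"
        "(1-p)*y*z/((1-p)*y*z + p*(1-y)*(1-z)) < p"
proof -
  have d: "0 < (1-p)*y*z + p*(1-y)*(1-z)" using p y z by (intro add_pos_pos) auto
  show "0 < (1-p)*y*z/((1-p)*y*z + p*(1-y)*(1-z))" using p y z d by simp
  have h1: "(1-p)*y < p*(1-y)" using y by (simp add: algebra_simps)
  have h2: "(1-p)*z < p*(1-z)" using z by (simp add: algebra_simps)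
  have "((1-p)*y)*((1-p)*z) < (p*(1-y))*(p*(1-z))"
    by (rule mult_strict_mono[OF h1 h2]) (use p y z in auto)
  then have "(1-p)*y*z < p*((1-p)*y*z + p*(1-y)*(1-z))"
    by (simp add: algebra_simps)
  then show "(1-p)*y*z/((1-p)*y*z + p*(1-y)*(1-z)) < p" using d by (simp add: divide_less_eq)
qed

lemma T_int:
  fixes p y :: real
  assumes p: "0 < p" "p < 1" and y: "0 < y" "y < p"
  shows "((\<lambda>z. (1-p)*y*z/((1-p)*y*z + p*(1-y)*(1-z))) has_integral
          ((1-p)*y/(p-y)) * (-p + (p*(1-y)/(p-y)) * (ln(1-y) - ln (1-p)))) {0..p}"
proof -
  define F where "F z = ((1-p)*y/(p-y))*(-z - (p*(1-y)/(p-y))*ln(p*(1-y) - (p-y)*z))" for z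
  have pos: "0 < p*(1-y) - (p-y)*z" if "z \<le> p" for z
  proof -
    have "(p-y)*z \<le> (p-y)*p" using that y by (intro mult_left_mono) auto
    moreover have "0 < p*(1-p)" using p by simp
    ultimately show ?thesis by (simp add: algebra_simps)
  qed
  have der: "(F has_real_derivative (1-p)*y*z/((1-p)*y*z + p*(1-y)*(1-z))) (at z)" if "z \<le> p" for z
  proof -
    obtain m d where md: "p - y = m" "p*(1-y) - (p-y)*z = d" by auto
    have m0: "m \<noteq> 0" "d \<noteq> 0" using md pos[OF that] y by auto
    have dd: "(1-p)*y*z + p*(1-y)*(1-z) = d" using md(2) by (simp add: algebra_simps)
    have d': "p*(1-y) - m*z = d" using md by auto
    have ys: "d = p*(1-y) - m*z" using md by auto
    show ?thesis unfolding F_def[abs_def]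
      apply (rule derivative_eq_intros refl | use pos[OF that] y in linarith)+
      apply (unfold dd md d')
      apply (simp add: field_simps m0)
      apply (simp add: ys algebra_simps)
      done
  qed
  have "((\<lambda>z. (1-p)*y*z/((1-p)*y*z + p*(1-y)*(1-z))) has_integral (F p - F 0)) {0..p}"
    using p der
    by (intro fundamental_theorem_of_calculus)
       (auto simp: has_real_derivative_iff_has_vector_derivative[symmetric] intro: has_field_derivative_at_within)
  moreover have "F p - F 0 = ((1-p)*y/(p-y)) * (-p + (p*(1-y)/(p-y)) * (ln(1-y) - ln (1-p)))"
  proof -
    have "p*(1-y) - (p-y)*p = p*(1-p)" by (simp add: algebra_simps)
    then have e1: "ln (p*(1-y) - (p-y)*p) = ln p + ln (1-p)" using p by (simp add: ln_mult)
    have e2: "ln (p*(1-y) - (p-y)*0) = ln p + ln (1-y)" using p y by (simp add: ln_mult)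
    obtain m where mm: "p - y = m" by auto
    have m0: "m \<noteq> 0" using y mm by simp
    show ?thesis unfolding F_def e1 e2 unfolding mm using m0 by (simp add: field_simps)
  qed
  ultimately show ?thesis by simp
qed


definition Kf :: "real \<Rightarrow> real \<Rightarrow> real" where
  "Kf p y = -(1-p)*p*( 2*(p-y) - p*(1-p)*Q((p-y)/(1-y))/(1-y) - p*ln(1-y) - (1-y)*(ln(1-y) - ln(1-p))
          + (p - (1-p))*(Li((p-y)/(1-y)) + (ln(1-y) - ln(1-p))^2/2))"

lemma Kf_deriv:
  fixes p y :: real
  assumes p: "0 < p" "p < 1" and y: "0 < y" "y < p"
  shows "(Kf p has_real_derivative ((1-p)*y/(p-y)) * (-p + (p*(1-y)/(p-y)) * (ln(1-y) - ln (1-p)))) (at y)"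
proof (rule has_field_derivative_transform_within_open[OF K1_deriv[OF p y], of "{0<..<p}"])
  fix z assume z: "z \<in> {0<..<p}"
  have "Q ((p-z)/(1-z)) * (p-z) = (ln(1-z) - ln (1-p)) * (1-z)"
    using Qw_lemma[OF p, of z] z by auto
  then have "Q((p-z)/(1-z))/(1-z) = (ln(1-z) - ln (1-p))/(p-z)"
    using z p by (subst frac_eq_eq) auto
  then have "p*(1-p)*Q((p-z)/(1-z))/(1-z) = p*(1-p)*(ln(1-z) - ln (1-p))/(p-z)"
    by (metis times_divide_eq_right)
  then show "-(1-p)*p*( 2*(p-z) - p*(1-p)*(ln(1-z) - ln (1-p))/(p-z) - p*ln(1-z) - (1-z)*(ln(1-z) - ln (1-p))
          + (p - (1-p))*(Li ((p-z)/(1-z)) + (ln(1-z) - ln (1-p))^2/2)) = Kf p z"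
    unfolding Kf_def by simp
qed (use y in auto)

lemma Q_comp: "isCont f x \<Longrightarrow> \<bar>f x\<bar> < 1 \<Longrightarrow> isCont (\<lambda>x. Q (f x)) x"
  by (rule isCont_o2[OF _ Q_cont])
lemma Li_comp: "isCont f x \<Longrightarrow> \<bar>f x\<bar> < 1 \<Longrightarrow> isCont (\<lambda>x. Li (f x)) x"
  by (rule isCont_o2[OF _ Li_cont])

lemma Kf_cont:
  fixes p :: real
  assumes p: "0 < p" "p < 1"
  shows "continuous_on {0..p} (Kf p)"
proof (rule continuous_at_imp_continuous_on, intro ballI)
  fix y assume y: "y \<in> {0..p}"
  have wlt: "\<bar>(p-y)/(1-y)\<bar> < 1" using p y by (auto simp: abs_if divide_less_eq)
  have y1: "1 - y \<noteq> 0" "0 < 1 - y" using p y by auto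
  show "isCont (Kf p) y" unfolding Kf_def[abs_def]
    apply (intro continuous_intros Q_comp Li_comp)
    using wlt y1 by auto
qed

lemma Kf_vals:
  fixes p :: real
  assumes p: "0 < p" "p < 1"
  shows "Kf p p = (1-p)*p*p*(1 + ln (1-p))"
        "Kf p 0 = -(1-p)*p*(2*p + (1-p)*ln(1-p) + ln(1-p) + (2*p-1)*(Li p + (ln (1-p))^2/2))"
proof -
  have e: "p*(1-p)/(1-p) = p" using p by simp
  have "Kf p p = -(1-p)*p*(- (p*(1-p)/(1-p)) - p*ln(1-p))"
    unfolding Kf_def by (simp add: Q_0 Li_0)
  also have "\<dots> = (1-p)*p*p*(1 + ln (1-p))" unfolding e by (simp add: algebra_simps)
  finally show "Kf p p = (1-p)*p*p*(1 + ln (1-p))" by (simp add: algebra_simps)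
  have "p * Q p = - ln (1-p)" using Q_ln[of p] p by simp
  then have qp: "Q p = - ln (1-p) / p" using p by (simp add: field_simps)
  show "Kf p 0 = -(1-p)*p*(2*p + (1-p)*ln(1-p) + ln(1-p) + (2*p-1)*(Li p + (ln (1-p))^2/2))"
    unfolding Kf_def using p by (simp add: qp field_simps power2_eq_square)
qed

lemma I_int:
  fixes p :: real
  assumes p: "0 < p" "p < 1"
  shows "((\<lambda>y. ((1-p)*y/(p-y)) * (-p + (p*(1-y)/(p-y)) * (ln(1-y) - ln (1-p)))) has_integral (Kf p p - Kf p 0)) {0..p}"
  using p Kf_cont[OF p] Kf_deriv[OF p]
  by (intro fundamental_theorem_of_calculus_interior)
     (auto simp: has_real_derivative_iff_has_vector_derivative[symmetric])


lemma Fo_formula: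
  fixes p :: real
  assumes p: "0 < p" "p < 1"
  shows "Fo p = p^3 - (1-p)*p*(3*p + 2*ln(1-p) + (2*p-1)*(Li p + (ln(1-p))^2/2))"
proof -
  define t where "t y z = (1-p)*y*z/((1-p)*y*z + p*(1-y)*(1-z))" for y z :: real
  define I where "I y = ((1-p)*y/(p-y)) * (-p + (p*(1-y)/(p-y)) * (ln(1-y) - ln (1-p)))" for y :: real
  have mem: "(x,y,z) \<in> Fo_set p \<longleftrightarrow> 0<x \<and> x<p \<and> 0<y \<and> y<p \<and> 0<z \<and> z<p \<and> t y z < x" for x y z
    by (auto simp: Fo_set_def cube_def t_def)
  have "measure lebesgue (Fo_set p) = p*p*p - (Kf p p - Kf p 0)"
  proof (rule iter2[where g = "\<lambda>y z. p - t y z" and G = "\<lambda>y. p*p - I y"])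
    show "Fo_set p \<in> sets borel" by (rule Fo_borel)
  next
    fix y z :: real assume yz: "0<y" "y<p" "0<z" "z<p"
    note tb = t_bounds[OF p yz, folded t_def]
    have "{x. (x,y,z) \<in> Fo_set p} = {t y z<..<p}" using tb yz by (auto simp: mem)
    then show "emeasure lborel {x. (x,y,z) \<in> Fo_set p} = ennreal (p - t y z)"
      using tb by simp
    show "0 \<le> p - t y z" using tb by simp
  next
    fix x y z assume "(x,y,z) \<in> Fo_set p"
    then show "0<y \<and> y<p \<and> 0<z \<and> z<p" by (auto simp: mem)
  next
    fix y :: real assume y: "0<y" "y<p"
    have "((\<lambda>z. p - t y z) has_integral (Henstock_Kurzweil_Integration.content {0..p} *\<^sub>R p - I y)) {0..p}"
      by (rule has_integral_diff[OF has_integral_const_real T_int[OF p y, folded t_def I_def]])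
    then show "((\<lambda>z. p - t y z) has_integral (p*p - I y)) {0<..<p}"
      using p by (simp add: has_integral_Icc_iff_Ioo[symmetric])
  next
    have "((\<lambda>y. p*p - I y) has_integral (Henstock_Kurzweil_Integration.content {0..p} *\<^sub>R (p*p) - (Kf p p - Kf p 0))) {0..p}"
      by (rule has_integral_diff[OF has_integral_const_real I_int[OF p, folded I_def]])
    then show "((\<lambda>y. p*p - I y) has_integral (p*p*p - (Kf p p - Kf p 0))) {0<..<p}"
      using p by (simp add: has_integral_Icc_iff_Ioo[symmetric] mult.assoc)
  qed
  moreover have "p*p*p - (Kf p p - Kf p 0) = p^3 - (1-p)*p*(3*p + 2*ln(1-p) + (2*p-1)*(Li p + (ln(1-p))^2/2))"
    unfolding Kf_vals[OF p] by (simp add: field_simps power2_eq_square power3_eq_cube)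
  ultimately show ?thesis unfolding Fo_def by simp
qed

lemma Fo_1: "Fo 1 = 1"
proof -
  have mem: "(x,y,z) \<in> Fo_set 1 \<longleftrightarrow> 0<x \<and> x<1 \<and> 0<y \<and> y<1 \<and> 0<z \<and> z<1" for x y z
    by (auto simp: Fo_set_def cube_def)
  have "measure lebesgue (Fo_set 1) = 1"
  proof (rule iter2[where p=1 and g = "\<lambda>y z. 1" and G = "\<lambda>y. 1"])
    show "Fo_set 1 \<in> sets borel" by (rule Fo_borel)
  next
    fix y z :: real assume yz: "0<y" "y<1" "0<z" "z<1"
    have "{x. (x,y,z) \<in> Fo_set 1} = {0<..<1}" using yz by (auto simp: mem)
    then show "emeasure lborel {x. (x,y,z) \<in> Fo_set 1} = ennreal 1" by simp
  next
    fix x y z assume "(x,y,z) \<in> Fo_set 1"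
    then show "0<y \<and> y<1 \<and> 0<z \<and> z<1" by (auto simp: mem)
  next
    show "((\<lambda>z. 1::real) has_integral 1) {0<..<(1::real)}"
      using has_integral_const_real[of "1::real" 0 1] by (simp add: has_integral_Icc_iff_Ioo[symmetric])
    then show "((\<lambda>z. 1::real) has_integral 1) {0<..<(1::real)}" .
  qed auto
  then show ?thesis unfolding Fo_def .
qed




lemma ftc_Icc:
  fixes a b :: real
  assumes "a \<le> b" "\<And>x. (F has_real_derivative f x) (at x)"
  shows "(f has_integral (F b - F a)) {a..b}"
  using assms
  by (intro fundamental_theorem_of_calculus)
     (auto simp: has_real_derivative_iff_has_vector_derivative[symmetric] intro: has_field_derivative_at_within)

lemma sandwich_measure:
  fixes l u :: real
  assumes "l \<le> u" "{l<..<u} \<subseteq> S" "S \<subseteq> {l..u}"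
  shows "emeasure lborel S = ennreal (u - l)"
proof (rule antisym)
  have "S \<in> sets lborel"
  proof -
    have "S = {l<..<u} \<union> (S \<inter> {l, u})" using assms by auto
    also have "\<dots> \<in> sets lborel"
      by (simp, intro sets.Un borel_open borel_closed finite_imp_closed) auto
    finally show ?thesis .
  qed
  show "emeasure lborel S \<le> ennreal (u - l)"
    using emeasure_mono[OF assms(3), of lborel] assms by simp
  show "ennreal (u - l) \<le> emeasure lborel S"
    using emeasure_mono[OF assms(2) \<open>S \<in> sets lborel\<close>] assms by simp
qed

lemma Fm_formula:
  fixes p :: real
  assumes p: "0 < p" "p \<le> 1"
  shows "Fm p = 3/4 * p^3"
proof -
  have mem: "(x,y,z) \<in> Fm_set p \<longleftrightarrow> 0<x \<and> x<p \<and> 0<y \<and> y<p \<and> 0<z \<and> z<p \<and> z \<le> x*p/y" for x y z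
    by (auto simp: Fm_set_def cube_def)
  have bor: "Fm_set p \<in> sets borel"
  proof -
    have "Fm_set p = {w \<in> space (borel \<Otimes>\<^sub>M (borel \<Otimes>\<^sub>M borel)). 0 < fst w \<and> fst w < p \<and> 0 < fst (snd w) \<and> fst (snd w) < p \<and> 0 < snd (snd w) \<and> snd (snd w) < p \<and>
       snd (snd w) \<le> fst w * p / fst (snd w)}"
      by (auto simp: Fm_set_def cube_def space_pair_measure)
    also have "\<dots> \<in> sets (borel \<Otimes>\<^sub>M (borel \<Otimes>\<^sub>M borel))" by measurable
    finally show ?thesis unfolding borel_prod .
  qed
  have "measure lebesgue (Fm_set p) = p*p*p - p*p*p/4"
  proof (rule iter2[where g = "\<lambda>y z. p - z*y/p" and G = "\<lambda>y. p*p - p*y/2"])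
    show "Fm_set p \<in> sets borel" by (rule bor)
  next
    fix y z :: real assume yz: "0<y" "y<p" "0<z" "z<p"
    have zy: "z*y < p*p" by (rule mult_strict_mono) (use yz in auto)
    then have zy': "z*y/p < p" using p by (simp add: divide_less_eq)
    have zy0: "0 < z*y/p" using yz p by simp
    have iff: "z \<le> x*p/y \<longleftrightarrow> z*y/p \<le> x" for x using yz p by (simp add: field_simps)
    have "{x. (x,y,z) \<in> Fm_set p} = {z*y/p..<p}"
    proof (intro set_eqI iffI)
      fix x assume "x \<in> {x. (x,y,z) \<in> Fm_set p}"
      then show "x \<in> {z*y/p..<p}" by (simp add: mem iff)
    next
      fix x assume x: "x \<in> {z*y/p..<p}"
      then have "0 < x" using zy0 by simp
      then show "x \<in> {x. (x,y,z) \<in> Fm_set p}" using x yz by (simp add: mem iff)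
    qed
    then show "emeasure lborel {x. (x,y,z) \<in> Fm_set p} = ennreal (p - z*y/p)"
      using zy' by simp
    show "0 \<le> p - z*y/p" using zy' by simp
  next
    fix x y z assume "(x,y,z) \<in> Fm_set p"
    then show "0<y \<and> y<p \<and> 0<z \<and> z<p" by (simp add: mem)
  next
    fix y :: real assume y: "0<y" "y<p"
    have d: "((\<lambda>z. p*z - z*z*y/(2*p)) has_real_derivative p - x*y/p) (at x)" for x
      apply (rule derivative_eq_intros refl | use p in linarith)+
      using p by (simp add: field_simps)
    have "((\<lambda>z. p - z*y/p) has_integral ((\<lambda>z. p*z - z*z*y/(2*p)) p - (\<lambda>z. p*z - z*z*y/(2*p)) 0)) {0..p}"
      by (rule ftc_Icc[OF _ d]) (use p in simp)
    then show "((\<lambda>z. p - z*y/p) has_integral (p*p - p*y/2)) {0<..<p}"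
      using p by (simp add: has_integral_Icc_iff_Ioo[symmetric] field_simps)
  next
    have d: "((\<lambda>y. p*p*y - p*y*y/4) has_real_derivative p*p - p*x/2) (at x)" for x
      apply (rule derivative_eq_intros refl | use p in linarith)+
      by (simp add: field_simps)
    have "((\<lambda>y. p*p - p*y/2) has_integral ((\<lambda>y. p*p*y - p*y*y/4) p - (\<lambda>y. p*p*y - p*y*y/4) 0)) {0..p}"
      by (rule ftc_Icc[OF _ d]) (use p in simp)
    then show "((\<lambda>y. p*p - p*y/2) has_integral (p*p*p - p*p*p/4)) {0<..<p}"
      using p by (simp add: has_integral_Icc_iff_Ioo[symmetric] field_simps)
  qed
  then show ?thesis unfolding Fm_def by (simp add: power3_eq_cube)
qed

lemma Fa_formula:
  fixes p :: real
  assumes p: "0 < p" "p \<le> 1"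
  shows "Fa p = 2/3 * p^3"
proof -
  have mem: "(x,y,z) \<in> Fa_set p \<longleftrightarrow> 0<x \<and> x<p \<and> 0<y \<and> y<p \<and> 0<z \<and> z<p \<and> max (y+z-p) 0 \<le> x \<and> x \<le> y+z" for x y z
    by (auto simp: Fa_set_def cube_def)
  have bor: "Fa_set p \<in> sets borel"
  proof -
    have "Fa_set p = {w \<in> space (borel \<Otimes>\<^sub>M (borel \<Otimes>\<^sub>M borel)). 0 < fst w \<and> fst w < p \<and> 0 < fst (snd w) \<and> fst (snd w) < p \<and> 0 < snd (snd w) \<and> snd (snd w) < p \<and>
       max (fst (snd w) + snd (snd w) - p) 0 \<le> fst w \<and> fst w \<le> fst (snd w) + snd (snd w)}"
      by (auto simp: Fa_set_def cube_def space_pair_measure)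
    also have "\<dots> \<in> sets (borel \<Otimes>\<^sub>M (borel \<Otimes>\<^sub>M borel))" by measurable
    finally show ?thesis unfolding borel_prod .
  qed
  define g where "g y z = min p (y+z) - max 0 (y+z-p)" for y z :: real
  have "measure lebesgue (Fa_set p) = 2/3*p*p*p"
  proof (rule iter2[where g = g and G = "\<lambda>y. (p*p + 2*p*y - 2*y*y)/2"])
    show "Fa_set p \<in> sets borel" by (rule bor)
  next
    fix y z :: real assume yz: "0<y" "y<p" "0<z" "z<p"
    show "emeasure lborel {x. (x,y,z) \<in> Fa_set p} = ennreal (g y z)"
      unfolding g_def
    proof (rule sandwich_measure)
      show "max 0 (y + z - p) \<le> min p (y + z)" using yz by simp
      show "{max 0 (y + z - p)<..<min p (y + z)} \<subseteq> {x. (x, y, z) \<in> Fa_set p}"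
        using yz by (auto simp: mem)
      show "{x. (x, y, z) \<in> Fa_set p} \<subseteq> {max 0 (y + z - p)..min p (y + z)}"
        using yz by (auto simp: mem)
    qed
    show "0 \<le> g y z" unfolding g_def using yz by simp
  next
    fix x y z assume "(x,y,z) \<in> Fa_set p"
    then show "0<y \<and> y<p \<and> 0<z \<and> z<p" by (simp add: mem)
  next
    fix y :: real assume y: "0<y" "y<p"
    have d1: "((\<lambda>z. y*z + z*z/2) has_real_derivative y + x) (at x)" for x
      apply (rule derivative_eq_intros refl | linarith)+
      by simp
    have d2: "((\<lambda>z. (2*p-y)*z - z*z/2) has_real_derivative 2*p - y - x) (at x)" for x
      apply (rule derivative_eq_intros refl | linarith)+
      by simp
    have i1: "((\<lambda>z. y + z) has_integral ((\<lambda>z. y*z + z*z/2) (p-y) - (\<lambda>z. y*z + z*z/2) 0)) {0..p-y}"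
      by (rule ftc_Icc[OF _ d1]) (use y in simp)
    have i2: "((\<lambda>z. 2*p - y - z) has_integral ((\<lambda>z. (2*p-y)*z - z*z/2) p - (\<lambda>z. (2*p-y)*z - z*z/2) (p-y))) {p-y..p}"
      by (rule ftc_Icc[OF _ d2]) (use y in simp)
    have i1': "(g y has_integral ((\<lambda>z. y*z + z*z/2) (p-y) - (\<lambda>z. y*z + z*z/2) 0)) {0..p-y}"
      by (rule has_integral_eq[OF _ i1]) (use y in \<open>simp add: g_def\<close>)
    have i2': "(g y has_integral ((\<lambda>z. (2*p-y)*z - z*z/2) p - (\<lambda>z. (2*p-y)*z - z*z/2) (p-y))) {p-y..p}"
      by (rule has_integral_eq[OF _ i2]) (use y in \<open>simp add: g_def\<close>)
    have "(g y has_integral ((\<lambda>z. y*z + z*z/2) (p-y) - (\<lambda>z. y*z + z*z/2) 0) + ((\<lambda>z. (2*p-y)*z - z*z/2) p - (\<lambda>z. (2*p-y)*z - z*z/2) (p-y))) {0..p}"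
      by (rule has_integral_combine[OF _ _ i1' i2']) (use y in simp_all)
    moreover have "((\<lambda>z. y*z + z*z/2) (p-y) - (\<lambda>z. y*z + z*z/2) 0) + ((\<lambda>z. (2*p-y)*z - z*z/2) p - (\<lambda>z. (2*p-y)*z - z*z/2) (p-y)) = (p*p + 2*p*y - 2*y*y)/2"
      by (simp add: field_simps)
    ultimately have "(g y has_integral ((p*p + 2*p*y - 2*y*y)/2)) {0..p}"
      by metis
    then show "(g y has_integral ((p*p + 2*p*y - 2*y*y)/2)) {0<..<p}"
      by (simp add: has_integral_Icc_iff_Ioo[symmetric])
  next
    have d: "((\<lambda>y. p*p*y/2 + p*y*y/2 - y*y*y/3) has_real_derivative (p*p + 2*p*x - 2*x*x)/2) (at x)" for x
      apply (rule derivative_eq_intros refl | linarith)+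
      by (simp add: field_simps)
    have "((\<lambda>y. (p*p + 2*p*y - 2*y*y)/2) has_integral ((\<lambda>y. p*p*y/2 + p*y*y/2 - y*y*y/3) p - (\<lambda>y. p*p*y/2 + p*y*y/2 - y*y*y/3) 0)) {0..p}"
      by (rule ftc_Icc[OF _ d]) (use p in simp)
    then show "((\<lambda>y. (p*p + 2*p*y - 2*y*y)/2) has_integral (2/3*p*p*p)) {0<..<p}"
      by (simp add: has_integral_Icc_iff_Ioo[symmetric] field_simps)
  qed
  then show ?thesis unfolding Fa_def by (simp add: power3_eq_cube)
qed



lemma ln_lo: assumes "0 \<le> x" "x < 1"
  shows "-(x * ((\<Sum>n<N. x^n / real (Suc n)) + (x^N / real (Suc N)) / (1-x))) \<le> ln (1-x)"
proof -
  have "Q x \<le> (\<Sum>n<N. x^n / real (Suc n)) + (x^N / real (Suc N)) / (1-x)" by (rule Q_bounds(2)[OF assms])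
  then have "x * Q x \<le> x * ((\<Sum>n<N. x^n / real (Suc n)) + (x^N / real (Suc N)) / (1-x))"
    using assms by (intro mult_left_mono) auto
  then show ?thesis using Q_ln[OF assms] by linarith
qed

lemma ln_hi: assumes "0 \<le> x" "x < 1"
  shows "ln (1-x) \<le> -(x * (\<Sum>n<N. x^n / real (Suc n)))"
proof -
  have "(\<Sum>n<N. x^n / real (Suc n)) \<le> Q x" by (rule Q_bounds(1)[OF assms])
  then have "x * (\<Sum>n<N. x^n / real (Suc n)) \<le> x * Q x"
    using assms by (intro mult_left_mono) auto
  then show ?thesis using Q_ln[OF assms] by linarith
qed

lemma sq_bounds:
  fixes a b l :: real
  assumes "a \<le> l" "l \<le> b" "b \<le> 0"
  shows "b^2 \<le> l^2" "l^2 \<le> a^2"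
proof -
  have "0 \<le> (b - l) * (-(l + b))" using assms by (intro mult_nonneg_nonneg) auto
  then show "b^2 \<le> l^2" by (simp add: algebra_simps power2_eq_square)
  have "0 \<le> (l - a) * (-(l + a))" using assms by (intro mult_nonneg_nonneg) auto
  then show "l^2 \<le> a^2" by (simp add: algebra_simps power2_eq_square)
qed

lemma ln_tenth: "ln (1/10::real) = 3 * ln (1 - 1/2) + ln (1 - 1/5)"
proof -
  have eq: "(1/10::real) = (1 - 1/2)^3 * (1 - 1/5)" by (simp add: eval_nat_numeral)
  have "ln (1/10::real) = ln ((1 - 1/2)^3 * (1 - 1/5))" by (simp only: eq[symmetric])
  also have "\<dots> = ln ((1 - 1/2)^3) + ln (1 - 1/5)" by (rule ln_mult_pos) simp_all
  also have "ln ((1 - 1/2::real)^3) = 3 * ln (1 - 1/2)" by (subst ln_realpow) simp_all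
  finally show ?thesis .
qed

lemma case_1: "rounds_to (Fo 0.1 / 0.1 ^ 3) 75"
proof -
  have F: "Fo 0.1 = 0.1^3 - (1-0.1)*0.1*(3*0.1 + 2*ln(1-0.1) + (2*0.1-1)*(Li 0.1 + (ln(1-0.1))^2/2))"
    by (rule Fo_formula) simp_all
  have l1: "(-52680257829/500000000000) \<le> ln (1 - (0.1::real))" using ln_lo[of "0.1" 12] by (simp add: eval_nat_numeral)
  have l2: "ln (1 - (0.1::real)) \<le> (-105360515657/1000000000000)" using ln_hi[of "0.1" 12] by (simp add: eval_nat_numeral)
  have s1a: "((-105360515657/1000000000000))^2 \<le> (ln (1 - (0.1::real)))^2" by (rule sq_bounds(1)[OF l1 l2]) simp
  have s1b: "(11100838259/1000000000000) \<le> ((-105360515657/1000000000000)::real)^2" by (simp add: power2_eq_square)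
  have s1: "(11100838259/1000000000000) \<le> (ln (1 - (0.1::real)))^2" by (rule order_trans[OF s1b s1a])
  have s2a: "(ln (1 - (0.1::real)))^2 \<le> ((-52680257829/500000000000))^2" by (rule sq_bounds(2)[OF l1 l2]) simp
  have s2b: "((-52680257829/500000000000)::real)^2 \<le> (555041913/50000000000)" by (simp add: power2_eq_square)
  have s2: "(ln (1 - (0.1::real)))^2 \<le> (555041913/50000000000)" by (rule order_trans[OF s2a s2b])
  have L1: "(102617791099/1000000000000) \<le> Li (0.1::real)" using Li_bounds(1)[of "0.1" 10] by (simp add: eval_nat_numeral)
  have L2: "Li (0.1::real) \<le> (1026177911/10000000000)" using Li_bounds(2)[of "0.1" 10] by (simp add: eval_nat_numeral)
  show ?thesis unfolding rounds_to_def F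
    apply (rule round_unique')
    using l1 l2 s1 s2 L1 L2 by (simp add: abs_less_iff field_simps; linarith)
qed

lemma case_2: "rounds_to (Fo 0.2 / 0.2 ^ 3) 76"
proof -
  have F: "Fo 0.2 = 0.2^3 - (1-0.2)*0.2*(3*0.2 + 2*ln(1-0.2) + (2*0.2-1)*(Li 0.2 + (ln(1-0.2))^2/2))"
    by (rule Fo_formula) simp_all
  have l1: "(-55785887829/250000000000) \<le> ln (1 - (0.2::real))" using ln_lo[of "0.2" 12] by (simp add: eval_nat_numeral)
  have l2: "ln (1 - (0.2::real)) \<le> (-55785887809/250000000000)" using ln_hi[of "0.2" 12] by (simp add: eval_nat_numeral)
  have s1a: "((-55785887809/250000000000))^2 \<le> (ln (1 - (0.2::real)))^2" by (rule sq_bounds(1)[OF l1 l2]) simp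
  have s1b: "(24896522229/500000000000) \<le> ((-55785887809/250000000000)::real)^2" by (simp add: power2_eq_square)
  have s1: "(24896522229/500000000000) \<le> (ln (1 - (0.2::real)))^2" by (rule order_trans[OF s1b s1a])
  have s2a: "(ln (1 - (0.2::real)))^2 \<le> ((-55785887829/250000000000))^2" by (rule sq_bounds(2)[OF l1 l2]) simp
  have s2b: "((-55785887829/250000000000)::real)^2 \<le> (24896522247/500000000000)" by (simp add: power2_eq_square)
  have s2: "(ln (1 - (0.2::real)))^2 \<le> (24896522247/500000000000)" by (rule order_trans[OF s2a s2b])
  have L1: "(52750943809/250000000000) \<le> Li (0.2::real)" using Li_bounds(1)[of "0.2" 10] by (simp add: eval_nat_numeral)
  have L2: "Li (0.2::real) \<le> (26375471931/125000000000)" using Li_bounds(2)[of "0.2" 10] by (simp add: eval_nat_numeral)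
  show ?thesis unfolding rounds_to_def F
    apply (rule round_unique')
    using l1 l2 s1 s2 L1 L2 by (simp add: abs_less_iff field_simps; linarith)
qed

lemma case_3: "rounds_to (Fo 0.3 / 0.3 ^ 3) 76"
proof -
  have F: "Fo 0.3 = 0.3^3 - (1-0.3)*0.3*(3*0.3 + 2*ln(1-0.3) + (2*0.3-1)*(Li 0.3 + (ln(1-0.3))^2/2))"
    by (rule Fo_formula) simp_all
  have l1: "(-178337471987/500000000000) \<le> ln (1 - (0.3::real))" using ln_lo[of "0.3" 14] by (simp add: eval_nat_numeral)
  have l2: "ln (1 - (0.3::real)) \<le> (-356674942607/1000000000000)" using ln_hi[of "0.3" 14] by (simp add: eval_nat_numeral)
  have s1a: "((-356674942607/1000000000000))^2 \<le> (ln (1 - (0.3::real)))^2" by (rule sq_bounds(1)[OF l1 l2]) simp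
  have s1b: "(127217014683/1000000000000) \<le> ((-356674942607/1000000000000)::real)^2" by (simp add: power2_eq_square)
  have s1: "(127217014683/1000000000000) \<le> (ln (1 - (0.3::real)))^2" by (rule order_trans[OF s1b s1a])
  have s2a: "(ln (1 - (0.3::real)))^2 \<le> ((-178337471987/500000000000))^2" by (rule sq_bounds(2)[OF l1 l2]) simp
  have s2b: "((-178337471987/500000000000)::real)^2 \<le> (127217015659/1000000000000)" by (simp add: power2_eq_square)
  have s2: "(ln (1 - (0.3::real)))^2 \<le> (127217015659/1000000000000)" by (rule order_trans[OF s2a s2b])
  have L1: "(326129508801/1000000000000) \<le> Li (0.3::real)" using Li_bounds(1)[of "0.3" 12] by (simp add: eval_nat_numeral)
  have L2: "Li (0.3::real) \<le> (6522590203/20000000000)" using Li_bounds(2)[of "0.3" 12] by (simp add: eval_nat_numeral)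
  show ?thesis unfolding rounds_to_def F
    apply (rule round_unique')
    using l1 l2 s1 s2 L1 L2 by (simp add: abs_less_iff field_simps; linarith)
qed

lemma case_4: "rounds_to (Fo 0.4 / 0.4 ^ 3) 77"
proof -
  have F: "Fo 0.4 = 0.4^3 - (1-0.4)*0.4*(3*0.4 + 2*ln(1-0.4) + (2*0.4-1)*(Li 0.4 + (ln(1-0.4))^2/2))"
    by (rule Fo_formula) simp_all
  have l1: "(-10216512487/20000000000) \<le> ln (1 - (0.4::real))" using ln_lo[of "0.4" 16] by (simp add: eval_nat_numeral)
  have l2: "ln (1 - (0.4::real)) \<le> (-255412803753/500000000000)" using ln_hi[of "0.4" 16] by (simp add: eval_nat_numeral)
  have s1a: "((-255412803753/500000000000))^2 \<le> (ln (1 - (0.4::real)))^2" by (rule sq_bounds(1)[OF l1 l2]) simp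
  have s1b: "(260942801283/1000000000000) \<le> ((-255412803753/500000000000)::real)^2" by (simp add: power2_eq_square)
  have s1: "(260942801283/1000000000000) \<le> (ln (1 - (0.4::real)))^2" by (rule order_trans[OF s1b s1a])
  have s2a: "(ln (1 - (0.4::real)))^2 \<le> ((-10216512487/20000000000))^2" by (rule sq_bounds(2)[OF l1 l2]) simp
  have s2b: "((-10216512487/20000000000)::real)^2 \<le> (260942818493/1000000000000)" by (simp add: power2_eq_square)
  have s2: "(ln (1 - (0.4::real)))^2 \<le> (260942818493/1000000000000)" by (rule order_trans[OF s2a s2b])
  have L1: "(89856593419/200000000000) \<le> Li (0.4::real)" using Li_bounds(1)[of "0.4" 14] by (simp add: eval_nat_numeral)
  have L2: "Li (0.4::real) \<le> (8985659501/20000000000)" using Li_bounds(2)[of "0.4" 14] by (simp add: eval_nat_numeral)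
  show ?thesis unfolding rounds_to_def F
    apply (rule round_unique')
    using l1 l2 s1 s2 L1 L2 by (simp add: abs_less_iff field_simps; linarith)
qed

lemma case_5: "rounds_to (Fo 0.5 / 0.5 ^ 3) 77"
proof -
  have F: "Fo 0.5 = 0.5^3 - (1-0.5)*0.5*(3*0.5 + 2*ln(1-0.5) + (2*0.5-1)*(Li 0.5 + (ln(1-0.5))^2/2))"
    by (rule Fo_formula) simp_all
  have l1: "(-138629437951/200000000000) \<le> ln (1 - (0.5::real))" using ln_lo[of "0.5" 18] by (simp add: eval_nat_numeral)
  have l2: "ln (1 - (0.5::real)) \<le> (-34657349449/50000000000)" using ln_hi[of "0.5" 18] by (simp add: eval_nat_numeral)
  have s1a: "((-34657349449/50000000000))^2 \<le> (ln (1 - (0.5::real)))^2" by (rule sq_bounds(1)[OF l1 l2]) simp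
  have s1b: "(120113187083/250000000000) \<le> ((-34657349449/50000000000)::real)^2" by (simp add: power2_eq_square)
  have s1: "(120113187083/250000000000) \<le> (ln (1 - (0.5::real)))^2" by (rule order_trans[OF s1b s1a])
  have s2a: "(ln (1 - (0.5::real)))^2 \<le> ((-138629437951/200000000000))^2" by (rule sq_bounds(2)[OF l1 l2]) simp
  have s2b: "((-138629437951/200000000000)::real)^2 \<le> (240226513333/500000000000)" by (simp add: power2_eq_square)
  have s2: "(ln (1 - (0.5::real)))^2 \<le> (240226513333/500000000000)" by (rule order_trans[OF s2a s2b])
  have L1: "(72780059829/125000000000) \<le> Li (0.5::real)" using Li_bounds(1)[of "0.5" 16] by (simp add: eval_nat_numeral)
  have L2: "Li (0.5::real) \<le> (72780066429/125000000000)" using Li_bounds(2)[of "0.5" 16] by (simp add: eval_nat_numeral)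
  show ?thesis unfolding rounds_to_def F
    apply (rule round_unique')
    using l1 l2 s1 s2 L1 L2 by (simp add: abs_less_iff field_simps; linarith)
qed

lemma case_6: "rounds_to (Fo 0.6 / 0.6 ^ 3) 78"
proof -
  have F: "Fo 0.6 = 0.6^3 - (1-0.6)*0.6*(3*0.6 + 2*ln(1-0.6) + (2*0.6-1)*(Li 0.6 + (ln(1-0.6))^2/2))"
    by (rule Fo_formula) simp_all
  have l1: "(-916290890247/1000000000000) \<le> ln (1 - (0.6::real))" using ln_lo[of "0.6" 20] by (simp add: eval_nat_numeral)
  have l2: "ln (1 - (0.6::real)) \<le> (-57268017419/62500000000)" using ln_hi[of "0.6" 20] by (simp add: eval_nat_numeral)
  have s1a: "((-57268017419/62500000000))^2 \<le> (ln (1 - (0.6::real)))^2" by (rule sq_bounds(1)[OF l1 l2]) simp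
  have s1b: "(83958420969/100000000000) \<le> ((-57268017419/62500000000)::real)^2" by (simp add: power2_eq_square)
  have s1: "(83958420969/100000000000) \<le> (ln (1 - (0.6::real)))^2" by (rule order_trans[OF s1b s1a])
  have s2a: "(ln (1 - (0.6::real)))^2 \<le> ((-916290890247/1000000000000))^2" by (rule sq_bounds(2)[OF l1 l2]) simp
  have s2b: "((-916290890247/1000000000000)::real)^2 \<le> (16791779911/20000000000)" by (simp add: power2_eq_square)
  have s2: "(ln (1 - (0.6::real)))^2 \<le> (16791779911/20000000000)" by (rule order_trans[OF s2a s2b])
  have L1: "(363793098681/500000000000) \<le> Li (0.6::real)" using Li_bounds(1)[of "0.6" 20] by (simp add: eval_nat_numeral)
  have L2: "Li (0.6::real) \<le> (727586321723/1000000000000)" using Li_bounds(2)[of "0.6" 20] by (simp add: eval_nat_numeral)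
  show ?thesis unfolding rounds_to_def F
    apply (rule round_unique')
    using l1 l2 s1 s2 L1 L2 by (simp add: abs_less_iff field_simps; linarith)
qed

lemma case_7: "rounds_to (Fo 0.7 / 0.7 ^ 3) 79"
proof -
  have F: "Fo 0.7 = 0.7^3 - (1-0.7)*0.7*(3*0.7 + 2*ln(1-0.7) + (2*0.7-1)*(Li 0.7 + (ln(1-0.7))^2/2))"
    by (rule Fo_formula) simp_all
  have l1: "(-150496773093/125000000000) \<le> ln (1 - (0.7::real))" using ln_lo[of "0.7" 24] by (simp add: eval_nat_numeral)
  have l2: "ln (1 - (0.7::real)) \<le> (-300989075957/250000000000)" using ln_hi[of "0.7" 24] by (simp add: eval_nat_numeral)
  have s1a: "((-300989075957/250000000000))^2 \<le> (ln (1 - (0.7::real)))^2" by (rule sq_bounds(1)[OF l1 l2]) simp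
  have s1b: "(1449510781527/1000000000000) \<le> ((-300989075957/250000000000)::real)^2" by (simp add: power2_eq_square)
  have s1: "(1449510781527/1000000000000) \<le> (ln (1 - (0.7::real)))^2" by (rule order_trans[OF s1b s1a])
  have s2a: "(ln (1 - (0.7::real)))^2 \<le> ((-150496773093/125000000000))^2" by (rule sq_bounds(2)[OF l1 l2]) simp
  have s2b: "((-150496773093/125000000000)::real)^2 \<le> (144955383753/100000000000)" by (simp add: power2_eq_square)
  have s2: "(ln (1 - (0.7::real)))^2 \<le> (144955383753/100000000000)" by (rule order_trans[OF s2a s2b])
  have L1: "(88937701053/100000000000) \<le> Li (0.7::real)" using Li_bounds(1)[of "0.7" 24] by (simp add: eval_nat_numeral)
  have L2: "Li (0.7::real) \<le> (111172215721/125000000000)" using Li_bounds(2)[of "0.7" 24] by (simp add: eval_nat_numeral)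
  show ?thesis unfolding rounds_to_def F
    apply (rule round_unique')
    using l1 l2 s1 s2 L1 L2 by (simp add: abs_less_iff field_simps; linarith)
qed

lemma case_8: "rounds_to (Fo 0.8 / 0.8 ^ 3) 81"
proof -
  have F: "Fo 0.8 = 0.8^3 - (1-0.8)*0.8*(3*0.8 + 2*ln(1-0.8) + (2*0.8-1)*(Li 0.8 + (ln(1-0.8))^2/2))"
    by (rule Fo_formula) simp_all
  have l1: "(-804727117383/500000000000) \<le> ln (1 - (0.8::real))" using ln_lo[of "0.8" 30] by (simp add: eval_nat_numeral)
  have l2: "ln (1 - (0.8::real)) \<le> (-804647250283/500000000000)" using ln_hi[of "0.8" 30] by (simp add: eval_nat_numeral)
  have s1a: "((-804647250283/500000000000))^2 \<le> (ln (1 - (0.8::real)))^2" by (rule sq_bounds(1)[OF l1 l2]) simp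
  have s1b: "(2589828789551/1000000000000) \<le> ((-804647250283/500000000000)::real)^2" by (simp add: power2_eq_square)
  have s1: "(2589828789551/1000000000000) \<le> (ln (1 - (0.8::real)))^2" by (rule order_trans[OF s1b s1a])
  have s2a: "(ln (1 - (0.8::real)))^2 \<le> ((-804727117383/500000000000))^2" by (rule sq_bounds(2)[OF l1 l2]) simp
  have s2b: "((-804727117383/500000000000)::real)^2 \<le> (2590342933807/1000000000000)" by (simp add: power2_eq_square)
  have s2: "(ln (1 - (0.8::real)))^2 \<le> (2590342933807/1000000000000)" by (rule order_trans[OF s2a s2b])
  have L1: "(537395199373/500000000000) \<le> Li (0.8::real)" using Li_bounds(1)[of "0.8" 30] by (simp add: eval_nat_numeral)
  have L2: "Li (0.8::real) \<le> (1074795551463/1000000000000)" using Li_bounds(2)[of "0.8" 30] by (simp add: eval_nat_numeral)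
  show ?thesis unfolding rounds_to_def F
    apply (rule round_unique')
    using l1 l2 s1 s2 L1 L2 by (simp add: abs_less_iff field_simps; linarith)
qed

lemma case_9: "rounds_to (Fo 0.9 / 0.9 ^ 3) 85"
proof -
  have F: "Fo 0.9 = 0.9^3 - (1-0.9)*0.9*(3*0.9 + 2*ln(1-0.9) + (2*0.9-1)*(Li 0.9 + (ln(1-0.9))^2/2))"
    by (rule Fo_formula) simp_all
  have h1: "(-34657364097/50000000000) \<le> ln (1 - 1/2::real)" using ln_lo[of "1/2" 15] by (simp add: eval_nat_numeral)
  have h2: "ln (1 - 1/2::real) \<le> (-69314537459/100000000000)" using ln_hi[of "1/2" 15] by (simp add: eval_nat_numeral)
  have f1: "(-44628710263/200000000000) \<le> ln (1 - 1/5::real)" using ln_lo[of "1/5" 15] by (simp add: eval_nat_numeral)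
  have f2: "ln (1 - 1/5::real) \<le> (-223143551313/1000000000000)" using ln_hi[of "1/5" 15] by (simp add: eval_nat_numeral)
  have e: "ln (1 - (0.9::real)) = 3 * ln (1 - 1/2::real) + ln (1 - 1/5)" using ln_tenth by simp
  have l1: "(-460517079427/200000000000) \<le> ln (1 - (0.9::real))" unfolding e using h1 f1 by linarith
  have l2: "ln (1 - (0.9::real)) \<le> (-2302579675083/1000000000000)" unfolding e using h2 f2 by linarith
  have s1a: "((-2302579675083/1000000000000))^2 \<le> (ln (1 - (0.9::real)))^2" by (rule sq_bounds(1)[OF l1 l2]) simp
  have s1b: "(1060374632021/200000000000) \<le> ((-2302579675083/1000000000000)::real)^2" by (simp add: power2_eq_square)
  have s1: "(1060374632021/200000000000) \<le> (ln (1 - (0.9::real)))^2" by (rule order_trans[OF s1b s1a])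
  have s2a: "(ln (1 - (0.9::real)))^2 \<le> ((-460517079427/200000000000))^2" by (rule sq_bounds(2)[OF l1 l2]) simp
  have s2b: "((-460517079427/200000000000)::real)^2 \<le> (53018995111/10000000000)" by (simp add: power2_eq_square)
  have s2: "(ln (1 - (0.9::real)))^2 \<le> (53018995111/10000000000)" by (rule order_trans[OF s2a s2b])
  have L1: "(1299446144381/1000000000000) \<le> Li (0.9::real)" using Li_bounds(1)[of "0.9" 30] by (simp add: eval_nat_numeral)
  have L2: "Li (0.9::real) \<le> (649921573973/500000000000)" using Li_bounds(2)[of "0.9" 30] by (simp add: eval_nat_numeral)
  show ?thesis unfolding rounds_to_def F
    apply (rule round_unique')
    using l1 l2 s1 s2 L1 L2 by (simp add: abs_less_iff field_simps; linarith)
qed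


theorem theorem1:
  shows "(\<forall>p::real. 0 < p \<and> p \<le> 1 \<longrightarrow> Fa p = 2 / 3 * p ^ 3)
    \<and> (\<forall>p::real. 0 < p \<and> p \<le> 1 \<longrightarrow> Fm p = 3 / 4 * p ^ 3)
    \<and> rounds_to (Fo 0.1 / 0.1 ^ 3) 75
    \<and> rounds_to (Fo 0.2 / 0.2 ^ 3) 76
    \<and> rounds_to (Fo 0.3 / 0.3 ^ 3) 76
    \<and> rounds_to (Fo 0.4 / 0.4 ^ 3) 77
    \<and> rounds_to (Fo 0.5 / 0.5 ^ 3) 77
    \<and> rounds_to (Fo 0.6 / 0.6 ^ 3) 78
    \<and> rounds_to (Fo 0.7 / 0.7 ^ 3) 79
    \<and> rounds_to (Fo 0.8 / 0.8 ^ 3) 81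
    \<and> rounds_to (Fo 0.9 / 0.9 ^ 3) 85
    \<and> rounds_to (Fo 1 / 1 ^ 3) 100"
proof -
  have f1: "rounds_to (Fo 1 / 1 ^ 3) 100" unfolding rounds_to_def Fo_1 by simp
  show ?thesis
    using Fa_formula Fm_formula case_1 case_2 case_3 case_4 case_5 case_6 case_7 case_8 case_9 f1
    by blast
qed

end
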